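(* Let $r$ be a positive integer, let $G_r=(V,E)$ be the Chimera graph, and let $c_{uv}\in\mathbb{R}$ for $(u,v)\in E$ and $d_u\in\mathbb{R}$ for $u\in V$ be arbitrary. Let $H^*=\min_{S\in\{-1,1\}^V}\left(\sum_{(u,v)\in E}c_{uv}S_uS_v+\sum_{u\in V}d_uS_u\right)$. Then $$H^*\le -\frac{C}{3C+4}\left[\sum_{(u,v)\in E}|c_{uv}|+\sum_{u\in V}|d_u|\right]$$ for some constant $C>\frac{\ln(1+\sqrt{2})}{\pi}$ (independent of $r$ and of the coefficients). In particular, the approximation factor $(3C+4)/C$ satisfies $(3C+4)/C<17.26$.
   Context: The Chimera graph $G_r=(V,E)$: $V=\{(i,j,k,l)\in\mathbb{Z}^4: 1\le i,j\le r,\ 1\le k\le 4,\ l\in\{0,1\}\}$. $E=E_0\cup E_1\cup E_{01}$ (disjoint), where $E_0$ consists of the edges $\{(i,j,k,0),(i+1,j,k,0)\}$ for $1\le i\le r-1$, $1\le j\le r$, $1\le k\le 4$; $E_1$ consists of the edges $\{(i,j,k,1),(i,j+1,k,1)\}$ for $1\le i\le r$, $1\le j\le r-1$, $1\le k\le 4$; and $E_{01}$ consists of the edges $\{(i,j,k_0,0),(i,j,k_1,1)\}$ for $1\le i,j\le r$, $1\le k_0,k_1\le 4$. *)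

theory Defs
  imports Complex_Main
begin

type_synonym vertex = "nat \<times> nat \<times> nat \<times> nat"

definition chimera_V :: "nat \<Rightarrow> vertex set" where
  "chimera_V r = {(i,j,k,l). 1 \<le> i \<and> i \<le> r \<and> 1 \<le> j \<and> j \<le> r \<and> 1 \<le> k \<and> k \<le> 4 \<and> l \<in> {0,1}}"

definition chimera_E0 :: "nat \<Rightarrow> (vertex \<times> vertex) set" where
  "chimera_E0 r = {((i,j,k,0),(i+1,j,k,0)) | i j k. 1 \<le> i \<and> i \<le> r - 1 \<and> 1 \<le> j \<and> j \<le> r \<and> 1 \<le> k \<and> k \<le> 4}"

definition chimera_E1 :: "nat \<Rightarrow> (vertex \<times> vertex) set" where
  "chimera_E1 r = {((i,j,k,1),(i,j+1,k,1)) | i j k. 1 \<le> i \<and> i \<le> r \<and> 1 \<le> j \<and> j \<le> r - 1 \<and> 1 \<le> k \<and> k \<le> 4}"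

definition chimera_E01 :: "nat \<Rightarrow> (vertex \<times> vertex) set" where
  "chimera_E01 r = {((i,j,k0,0),(i,j,k1,1)) | i j k0 k1. 1 \<le> i \<and> i \<le> r \<and> 1 \<le> j \<and> j \<le> r \<and> 1 \<le> k0 \<and> k0 \<le> 4 \<and> 1 \<le> k1 \<and> k1 \<le> 4}"

definition chimera_E :: "nat \<Rightarrow> (vertex \<times> vertex) set" where
  "chimera_E r = chimera_E0 r \<union> chimera_E1 r \<union> chimera_E01 r"

definition ising_energy ::
  "nat \<Rightarrow> (vertex \<times> vertex \<Rightarrow> real) \<Rightarrow> (vertex \<Rightarrow> real) \<Rightarrow> (vertex \<Rightarrow> real) \<Rightarrow> real" where
  "ising_energy r c d S =
     (\<Sum>(u,v)\<in>chimera_E r. c (u,v) * S u * S v) + (\<Sum>u\<in>chimera_V r. d u * S u)"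

definition ground_energy ::
  "nat \<Rightarrow> (vertex \<times> vertex \<Rightarrow> real) \<Rightarrow> (vertex \<Rightarrow> real) \<Rightarrow> real" where
  "ground_energy r c d =
     Min {ising_energy r c d S | S. \<forall>u\<in>chimera_V r. S u \<in> {-1, 1}}"

end

theory Submission
  imports Defs "HOL-Analysis.Complex_Transcendental"
begin

definition sg :: "real \<Rightarrow> real" where "sg x = (if x \<ge> 0 then 1 else -1)"

lemma sg_mult: "sg x * x = \<bar>x\<bar>" by (simp add: sg_def)
lemma sg_mult2: "x * sg x = \<bar>x\<bar>" by (simp add: sg_def)
lemma sg_sq: "sg x * sg x = 1" by (simp add: sg_def)
lemma sg_in: "sg x \<in> {-1,1}" by (simp add: sg_def)

lemma V_fin: "finite (chimera_V r)"
proof -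
  have "chimera_V r \<subseteq> {1..r} \<times> {1..r} \<times> {1..4} \<times> {0,1}"
    by (auto simp: chimera_V_def)
  then show ?thesis by (rule finite_subset) auto
qed

lemma E_sub: "chimera_E r \<subseteq> chimera_V r \<times> chimera_V r"
  by (auto simp: chimera_E_def chimera_E0_def chimera_E1_def chimera_E01_def chimera_V_def)

lemma E_fin: "finite (chimera_E r)"
  using finite_subset[OF E_sub] V_fin by blast

lemma sum_inv_zero:
  assumes "finite A" "\<forall>x\<in>A. \<phi> x \<in> A" "\<forall>x\<in>A. \<phi> (\<phi> x) = x"
    "\<forall>x\<in>A. g (\<phi> x) = - g x"
  shows "sum g A = (0::real)"
proof -
  have bij: "bij_betw \<phi> A A"
    by (rule bij_betw_byWitness[where f'=\<phi>]) (use assms in auto)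
  have "sum g A = sum (\<lambda>x. g (\<phi> x)) A" using sum.reindex_bij_betw[OF bij, of g] by simp
  also have "\<dots> = sum (\<lambda>x. - g x) A" using assms(4) by (intro sum.cong) auto
  also have "\<dots> = - sum g A" by (simp add: sum_negf)
  finally show ?thesis by simp
qed

lemma GE:
  assumes "\<forall>u\<in>chimera_V r. S u \<in> {-1,1}"
  shows "ground_energy r c d \<le> ising_energy r c d S"
proof -
  let ?V = "chimera_V r"
  have eq: "ising_energy r c d T = ising_energy r c d (restrict T ?V)" for T
  proof -
    have "(\<Sum>(u,v)\<in>chimera_E r. c (u,v) * T u * T v) =
          (\<Sum>(u,v)\<in>chimera_E r. c (u,v) * restrict T ?V u * restrict T ?V v)"
    proof (intro sum.cong refl)
      fix e assume "e \<in> chimera_E r"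
      then have "fst e \<in> ?V \<and> snd e \<in> ?V" using E_sub[of r] by (auto simp: mem_Times_iff)
      then show "(case e of (u,v) \<Rightarrow> c (u,v) * T u * T v) =
          (case e of (u,v) \<Rightarrow> c (u,v) * restrict T ?V u * restrict T ?V v)"
        by (simp add: case_prod_beta)
    qed
    moreover have "(\<Sum>u\<in>?V. d u * T u) = (\<Sum>u\<in>?V. d u * restrict T ?V u)"
      by (intro sum.cong) auto
    ultimately show ?thesis by (simp add: ising_energy_def)
  qed
  have sub: "{ising_energy r c d S | S. \<forall>u\<in>?V. S u \<in> {-1, 1}} \<subseteq>
      ising_energy r c d ` (PiE ?V (\<lambda>_. {-1,1}))"
  proof
    fix x assume "x \<in> {ising_energy r c d S | S. \<forall>u\<in>?V. S u \<in> {-1, 1}}"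
    then obtain T where T: "x = ising_energy r c d T" "\<forall>u\<in>?V. T u \<in> {-1, 1}" by blast
    then have "restrict T ?V \<in> PiE ?V (\<lambda>_. {-1,1})" by auto
    then show "x \<in> ising_energy r c d ` (PiE ?V (\<lambda>_. {-1,1}))" using T eq by blast
  qed
  have fin: "finite {ising_energy r c d S | S. \<forall>u\<in>?V. S u \<in> {-1, 1}}"
    by (rule finite_subset[OF sub]) (intro finite_imageI finite_PiE V_fin; simp)
  show ?thesis unfolding ground_energy_def
    by (rule Min_le[OF fin]) (use assms in blast)
qed

lemma flip_avg:
  fixes \<pi> :: "vertex \<Rightarrow> 'k" and \<sigma> :: "vertex \<Rightarrow> real"
  assumes sig: "\<forall>u\<in>chimera_V r. \<sigma> u \<in> {-1,1}"
  shows "ground_energy r c d \<le>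
     (\<Sum>e\<in>chimera_E r. if \<pi> (fst e) = \<pi> (snd e) then c e * \<sigma> (fst e) * \<sigma> (snd e) else 0)"
proof -
  let ?V = "chimera_V r" and ?E = "chimera_E r"
  define K where "K = \<pi> ` ?V"
  define A where "A = PiE K (\<lambda>_. {-1,1::real})"
  define I where "I = (\<Sum>e\<in>?E. if \<pi> (fst e) = \<pi> (snd e) then c e * \<sigma> (fst e) * \<sigma> (snd e) else 0)"
  define S where "S = (\<lambda>\<epsilon> u. \<epsilon> (\<pi> u) * \<sigma> u)"
  have finA: "finite A" unfolding A_def K_def using V_fin by (intro finite_PiE) auto
  have "(\<lambda>k\<in>K. 1) \<in> A" unfolding A_def by auto
  then have neA: "A \<noteq> {}" by blast
  have vals: "\<epsilon> a \<in> {-1,1}" if "\<epsilon> \<in> A" "a \<in> K" for \<epsilon> a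
    using that unfolding A_def by auto
  have upd: "\<epsilon>(a := - \<epsilon> a) \<in> A" if "\<epsilon> \<in> A" "a \<in> K" for \<epsilon> a
    using that unfolding A_def by (auto simp: PiE_iff extensional_def)
  have F1: "(\<Sum>\<epsilon>\<in>A. \<epsilon> a) = 0" if "a \<in> K" for a
    by (rule sum_inv_zero[where \<phi>="\<lambda>\<epsilon>. \<epsilon>(a := - \<epsilon> a)"]) (use finA upd that in auto)
  have F2: "(\<Sum>\<epsilon>\<in>A. \<epsilon> a * \<epsilon> b) = (if a = b then real (card A) else 0)"
    if "a \<in> K" "b \<in> K" for a b
  proof (cases "a = b")
    case True
    have "(\<Sum>\<epsilon>\<in>A. \<epsilon> a * \<epsilon> b) = (\<Sum>\<epsilon>\<in>A. 1)"
    proof (intro sum.cong refl)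
      fix x assume "x \<in> A"
      then have "x a \<in> {-1,1}" using vals that by auto
      then show "x a * x b = 1" using True by auto
    qed
    then show ?thesis using True by simp
  next
    case False
    have "(\<Sum>\<epsilon>\<in>A. \<epsilon> a * \<epsilon> b) = 0"
      by (rule sum_inv_zero[where \<phi>="\<lambda>\<epsilon>. \<epsilon>(a := - \<epsilon> a)"]) (use finA upd that False in auto)
    then show ?thesis using False by simp
  qed
  have edge: "(\<Sum>\<epsilon>\<in>A. c (u,v) * S \<epsilon> u * S \<epsilon> v) =
      real (card A) * (if \<pi> u = \<pi> v then c (u,v) * \<sigma> u * \<sigma> v else 0)"
    if "(u,v) \<in> ?E" for u v
  proof -
    have uv: "\<pi> u \<in> K" "\<pi> v \<in> K" using that E_sub unfolding K_def by auto
    have "(\<Sum>\<epsilon>\<in>A. c (u,v) * S \<epsilon> u * S \<epsilon> v) =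
        (\<Sum>\<epsilon>\<in>A. (c (u,v) * \<sigma> u * \<sigma> v) * (\<epsilon> (\<pi> u) * \<epsilon> (\<pi> v)))"
      unfolding S_def by (intro sum.cong) (auto simp: algebra_simps)
    also have "\<dots> = (c (u,v) * \<sigma> u * \<sigma> v) * (\<Sum>\<epsilon>\<in>A. \<epsilon> (\<pi> u) * \<epsilon> (\<pi> v))"
      by (simp add: sum_distrib_left)
    also have "\<dots> = real (card A) * (if \<pi> u = \<pi> v then c (u,v) * \<sigma> u * \<sigma> v else 0)"
      using F2[OF uv] by simp
    finally show ?thesis .
  qed
  have vert: "(\<Sum>\<epsilon>\<in>A. d u * S \<epsilon> u) = 0" if "u \<in> ?V" for u
  proof -
    have "(\<Sum>\<epsilon>\<in>A. d u * S \<epsilon> u) = (d u * \<sigma> u) * (\<Sum>\<epsilon>\<in>A. \<epsilon> (\<pi> u))"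
      unfolding S_def by (simp add: sum_distrib_left algebra_simps)
    also have "\<dots> = 0" using F1[of "\<pi> u"] that unfolding K_def by simp
    finally show ?thesis .
  qed
  have total: "(\<Sum>\<epsilon>\<in>A. ising_energy r c d (S \<epsilon>)) = real (card A) * I"
  proof -
    have "(\<Sum>\<epsilon>\<in>A. ising_energy r c d (S \<epsilon>)) =
       (\<Sum>\<epsilon>\<in>A. \<Sum>e\<in>?E. c e * S \<epsilon> (fst e) * S \<epsilon> (snd e)) + (\<Sum>\<epsilon>\<in>A. \<Sum>u\<in>?V. d u * S \<epsilon> u)"
      by (simp add: ising_energy_def sum.distrib case_prod_beta)
    also have "\<dots> = (\<Sum>e\<in>?E. \<Sum>\<epsilon>\<in>A. c e * S \<epsilon> (fst e) * S \<epsilon> (snd e)) + (\<Sum>u\<in>?V. \<Sum>\<epsilon>\<in>A. d u * S \<epsilon> u)"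
      by (simp add: sum.swap[of _ A])
    also have "\<dots> = (\<Sum>e\<in>?E. real (card A) * (if \<pi> (fst e) = \<pi> (snd e) then c e * \<sigma> (fst e) * \<sigma> (snd e) else 0)) + 0"
      using edge vert by (intro arg_cong2[where f="(+)"] sum.cong sum.neutral) auto
    also have "\<dots> = real (card A) * I" by (simp add: I_def sum_distrib_left)
    finally show ?thesis .
  qed
  have "\<exists>\<epsilon>\<in>A. ising_energy r c d (S \<epsilon>) \<le> I"
  proof (rule ccontr)
    assume "\<not> ?thesis"
    then have "\<forall>\<epsilon>\<in>A. I < ising_energy r c d (S \<epsilon>)" by auto
    then have "(\<Sum>\<epsilon>\<in>A. I) < (\<Sum>\<epsilon>\<in>A. ising_energy r c d (S \<epsilon>))"
      using finA neA by (intro sum_strict_mono) auto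
    then show False using total by simp
  qed
  then obtain \<epsilon> where e: "\<epsilon> \<in> A" "ising_energy r c d (S \<epsilon>) \<le> I" by blast
  have "\<forall>u\<in>?V. S \<epsilon> u \<in> {-1,1}"
  proof
    fix u assume "u \<in> ?V"
    then have "\<epsilon> (\<pi> u) \<in> {-1,1}" "\<sigma> u \<in> {-1,1}" using vals[OF e(1)] sig unfolding K_def by auto
    then show "S \<epsilon> u \<in> {-1,1}" unfolding S_def by auto
  qed
  from GE[OF this, of c d] e(2) show ?thesis unfolding I_def by linarith
qed


primrec p0 :: "(vertex \<times> vertex \<Rightarrow> real) \<Rightarrow> nat \<Rightarrow> nat \<Rightarrow> nat \<Rightarrow> real" where
  "p0 c j k 0 = 1"
| "p0 c j k (Suc i) = - sg (c ((i,j,k,0),(Suc i,j,k,0))) * p0 c j k i"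

primrec p1 :: "(vertex \<times> vertex \<Rightarrow> real) \<Rightarrow> nat \<Rightarrow> nat \<Rightarrow> nat \<Rightarrow> real" where
  "p1 c i k 0 = 1"
| "p1 c i k (Suc j) = - sg (c ((i,j,k,1),(i,Suc j,k,1))) * p1 c i k j"

lemma p0_sq: "p0 c j k i * p0 c j k i = 1"
proof (induction i)
  case (Suc i)
  have "p0 c j k (Suc i) * p0 c j k (Suc i) =
      (sg (c ((i,j,k,0),(Suc i,j,k,0))) * sg (c ((i,j,k,0),(Suc i,j,k,0)))) * (p0 c j k i * p0 c j k i)"
    by (simp add: algebra_simps)
  then show ?case using Suc sg_sq by simp
qed simp

lemma p1_sq: "p1 c i k j * p1 c i k j = 1"
proof (induction j)
  case (Suc j)
  have "p1 c i k (Suc j) * p1 c i k (Suc j) =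
      (sg (c ((i,j,k,1),(i,Suc j,k,1))) * sg (c ((i,j,k,1),(i,Suc j,k,1)))) * (p1 c i k j * p1 c i k j)"
    by (simp add: algebra_simps)
  then show ?case using Suc sg_sq by simp
qed simp

lemma sq1_in: "(x::real) * x = 1 \<Longrightarrow> x \<in> {-1,1}"
proof -
  assume "x * x = 1"
  then have "(x - 1) * (x + 1) = 0" by (simp add: algebra_simps)
  then show ?thesis by auto
qed

lemma E_cases:
  assumes "e \<in> chimera_E r"
  obtains (E0) i j k where "e = ((i,j,k,0),(Suc i,j,k,0))" "e \<in> chimera_E0 r" "e \<notin> chimera_E01 r"
  | (E1) i j k where "e = ((i,j,k,1),(i,Suc j,k,1))" "e \<in> chimera_E1 r" "e \<notin> chimera_E01 r"
  | (E01) i j k0 k1 where "e = ((i,j,k0,0),(i,j,k1,1))" "e \<in> chimera_E01 r"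
       "e \<notin> chimera_E0 r" "e \<notin> chimera_E1 r" "1 \<le> k0" "k0 \<le> 4"
  using assms unfolding chimera_E_def chimera_E0_def chimera_E1_def chimera_E01_def
  by auto

lemma strat_P:
  "ground_energy r c d \<le> - (\<Sum>e\<in>chimera_E r. if e \<in> chimera_E0 r \<union> chimera_E1 r then \<bar>c e\<bar> else 0)"
proof -
  define \<pi> :: "vertex \<Rightarrow> nat \<times> nat \<times> nat" where
    "\<pi> = (\<lambda>(i,j,k,l). (l, if l = 0 then j else i, k))"
  define \<sigma> :: "vertex \<Rightarrow> real" where
    "\<sigma> = (\<lambda>(i,j,k,l). if l = 0 then p0 c j k i else p1 c i k j)"
  have sig: "\<forall>u\<in>chimera_V r. \<sigma> u \<in> {-1,1}"
  proof
    fix u :: vertex assume "u \<in> chimera_V r"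
    obtain i j k l where u: "u = (i,j,k,l)" by (cases u) auto
    show "\<sigma> u \<in> {-1,1}" unfolding u \<sigma>_def using sq1_in[OF p0_sq] sq1_in[OF p1_sq] by simp
  qed
  have pt: "(if \<pi> (fst e) = \<pi> (snd e) then c e * \<sigma> (fst e) * \<sigma> (snd e) else 0) =
      - (if e \<in> chimera_E0 r \<union> chimera_E1 r then \<bar>c e\<bar> else 0)" if "e \<in> chimera_E r" for e
    using that
  proof (cases rule: E_cases)
    case (E0 i j k)
    have "c e * p0 c j k i * (- sg (c e) * p0 c j k i) = - (sg (c e) * c e) * (p0 c j k i * p0 c j k i)"
      by (simp add: algebra_simps)
    then show ?thesis using E0 p0_sq sg_mult by (simp add: \<pi>_def \<sigma>_def)
  next
    case (E1 i j k)
    have "c e * p1 c i k j * (- sg (c e) * p1 c i k j) = - (sg (c e) * c e) * (p1 c i k j * p1 c i k j)"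
      by (simp add: algebra_simps)
    then show ?thesis using E1 p1_sq sg_mult by (simp add: \<pi>_def \<sigma>_def)
  next
    case (E01 i j k0 k1)
    then show ?thesis by (simp add: \<pi>_def)
  qed
  have "ground_energy r c d \<le>
     (\<Sum>e\<in>chimera_E r. if \<pi> (fst e) = \<pi> (snd e) then c e * \<sigma> (fst e) * \<sigma> (snd e) else 0)"
    by (rule flip_avg[OF sig])
  also have "\<dots> = (\<Sum>e\<in>chimera_E r. - (if e \<in> chimera_E0 r \<union> chimera_E1 r then \<bar>c e\<bar> else 0))"
    using pt by (intro sum.cong) auto
  finally show ?thesis by (simp add: sum_negf)
qed

lemma strat_K:
  "ground_energy r c d \<le> - (\<Sum>e\<in>chimera_E r.
      if e \<in> chimera_E01 r \<and> fst (snd (snd (fst e))) = k then \<bar>c e\<bar> else 0)"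
proof -
  define \<pi> :: "vertex \<Rightarrow> nat \<times> nat \<times> nat" where
    "\<pi> = (\<lambda>(i,j,k',l). if l = 1 \<or> k' = k then (i,j,0) else (i,j,k'))"
  define \<sigma> :: "vertex \<Rightarrow> real" where
    "\<sigma> = (\<lambda>(i,j,k',l). if l = 0 then 1 else - sg (c ((i,j,k,0),(i,j,k',1))))"
  have sig: "\<forall>u\<in>chimera_V r. \<sigma> u \<in> {-1,1}"
  proof
    fix u :: vertex assume "u \<in> chimera_V r"
    obtain i j k' l where u: "u = (i,j,k',l)" by (cases u) auto
    show "\<sigma> u \<in> {-1,1}" unfolding u \<sigma>_def by (simp add: sg_def)
  qed
  have pt: "(if \<pi> (fst e) = \<pi> (snd e) then c e * \<sigma> (fst e) * \<sigma> (snd e) else 0) =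
      - (if e \<in> chimera_E01 r \<and> fst (snd (snd (fst e))) = k then \<bar>c e\<bar> else 0)"
    if "e \<in> chimera_E r" for e
    using that
  proof (cases rule: E_cases)
    case (E0 i j k)
    then show ?thesis by (simp add: \<pi>_def)
  next
    case (E1 i j k)
    then show ?thesis by (simp add: \<pi>_def)
  next
    case (E01 i j k0 k1)
    show ?thesis
    proof (cases "k0 = k")
      case True
      then show ?thesis using E01 sg_mult2[of "c e"] by (simp add: \<pi>_def \<sigma>_def)
    next
      case False
      then show ?thesis using E01 by (simp add: \<pi>_def)
    qed
  qed
  have "ground_energy r c d \<le>
     (\<Sum>e\<in>chimera_E r. if \<pi> (fst e) = \<pi> (snd e) then c e * \<sigma> (fst e) * \<sigma> (snd e) else 0)"
    by (rule flip_avg[OF sig])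
  also have "\<dots> = (\<Sum>e\<in>chimera_E r. - (if e \<in> chimera_E01 r \<and> fst (snd (snd (fst e))) = k then \<bar>c e\<bar> else 0))"
    using pt by (intro sum.cong) auto
  finally show ?thesis by (simp add: sum_negf)
qed

lemma strat_F:
  "ground_energy r c d \<le> (\<Sum>e\<in>chimera_E r. \<bar>c e\<bar>) - (\<Sum>u\<in>chimera_V r. \<bar>d u\<bar>)"
proof -
  define S where "S = (\<lambda>u. - sg (d u))"
  have cfg: "\<forall>u\<in>chimera_V r. S u \<in> {-1,1}" unfolding S_def by (auto simp: sg_def)
  have a: "(\<Sum>(u,v)\<in>chimera_E r. c (u,v) * S u * S v) \<le> (\<Sum>e\<in>chimera_E r. \<bar>c e\<bar>)"
  proof (rule sum_mono)
    fix e assume "e \<in> chimera_E r"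
    have "\<bar>S (fst e) * S (snd e)\<bar> = 1" unfolding S_def by (simp add: sg_def)
    then have "c e * (S (fst e) * S (snd e)) \<le> \<bar>c e\<bar>"
      by (metis abs_ge_self abs_mult mult.right_neutral)
    then show "(case e of (u,v) \<Rightarrow> c (u,v) * S u * S v) \<le> \<bar>c e\<bar>"
      by (simp add: case_prod_beta mult.assoc)
  qed
  have b: "(\<Sum>u\<in>chimera_V r. d u * S u) = - (\<Sum>u\<in>chimera_V r. \<bar>d u\<bar>)"
    unfolding S_def using sg_mult by (simp add: sum_negf mult.commute)
  have "ground_energy r c d \<le> ising_energy r c d S" by (rule GE[OF cfg])
  then show ?thesis using a b unfolding ising_energy_def by linarith
qed

lemma main_bound:
  "ground_energy r c d \<le> - (1/11) *
     ((\<Sum>e\<in>chimera_E r. \<bar>c e\<bar>) + (\<Sum>u\<in>chimera_V r. \<bar>d u\<bar>))"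
proof -
  let ?E = "chimera_E r"
  define WP where "WP = (\<Sum>e\<in>?E. if e \<in> chimera_E0 r \<union> chimera_E1 r then \<bar>c e\<bar> else 0)"
  define X where "X = (\<lambda>k. (\<Sum>e\<in>?E. if e \<in> chimera_E01 r \<and> fst (snd (snd (fst e))) = k then \<bar>c e\<bar> else 0))"
  define W01 where "W01 = (\<Sum>e\<in>?E. if e \<in> chimera_E01 r then \<bar>c e\<bar> else 0)"
  have split: "(\<Sum>e\<in>?E. \<bar>c e\<bar>) = WP + W01"
  proof -
    have "(\<Sum>e\<in>?E. \<bar>c e\<bar>) = (\<Sum>e\<in>?E. (if e \<in> chimera_E0 r \<union> chimera_E1 r then \<bar>c e\<bar> else 0)
        + (if e \<in> chimera_E01 r then \<bar>c e\<bar> else 0))"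
    proof (intro sum.cong refl)
      fix e assume "e \<in> ?E"
      then show "\<bar>c e\<bar> = (if e \<in> chimera_E0 r \<union> chimera_E1 r then \<bar>c e\<bar> else 0)
        + (if e \<in> chimera_E01 r then \<bar>c e\<bar> else 0)"
        by (cases rule: E_cases) auto
    qed
    then show ?thesis by (simp add: WP_def W01_def sum.distrib)
  qed
  have sumX: "X 1 + X 2 + X 3 + X 4 = W01"
  proof -
    have "X 1 + X 2 + X 3 + X 4 = (\<Sum>e\<in>?E.
        (if e \<in> chimera_E01 r \<and> fst (snd (snd (fst e))) = 1 then \<bar>c e\<bar> else 0) +
        (if e \<in> chimera_E01 r \<and> fst (snd (snd (fst e))) = 2 then \<bar>c e\<bar> else 0) +
        (if e \<in> chimera_E01 r \<and> fst (snd (snd (fst e))) = 3 then \<bar>c e\<bar> else 0) +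
        (if e \<in> chimera_E01 r \<and> fst (snd (snd (fst e))) = 4 then \<bar>c e\<bar> else 0))"
      by (simp add: X_def sum.distrib)
    also have "\<dots> = W01" unfolding W01_def
    proof (intro sum.cong refl)
      fix e assume "e \<in> ?E"
      then show "(if e \<in> chimera_E01 r \<and> fst (snd (snd (fst e))) = 1 then \<bar>c e\<bar> else 0) +
        (if e \<in> chimera_E01 r \<and> fst (snd (snd (fst e))) = 2 then \<bar>c e\<bar> else 0) +
        (if e \<in> chimera_E01 r \<and> fst (snd (snd (fst e))) = 3 then \<bar>c e\<bar> else 0) +
        (if e \<in> chimera_E01 r \<and> fst (snd (snd (fst e))) = 4 then \<bar>c e\<bar> else 0) =
        (if e \<in> chimera_E01 r then \<bar>c e\<bar> else 0)"
      proof (cases rule: E_cases)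
        case (E01 i j k0 k1)
        then have "k0 = 1 \<or> k0 = 2 \<or> k0 = 3 \<or> k0 = 4" by auto
        then show ?thesis using E01 by auto
      qed auto
    qed
    finally show ?thesis .
  qed
  have h1: "ground_energy r c d \<le> - WP" using strat_P unfolding WP_def .
  have hk: "ground_energy r c d \<le> - X k" for k using strat_K unfolding X_def .
  have h3: "ground_energy r c d \<le> (\<Sum>e\<in>?E. \<bar>c e\<bar>) - (\<Sum>u\<in>chimera_V r. \<bar>d u\<bar>)" by (rule strat_F)
  have "11 * ground_energy r c d \<le> - ((\<Sum>e\<in>?E. \<bar>c e\<bar>) + (\<Sum>u\<in>chimera_V r. \<bar>d u\<bar>))"
    using h1 hk[of 1] hk[of 2] hk[of 3] hk[of 4] h3 unfolding split sumX[symmetric] by linarith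
  then show ?thesis by (simp add: field_simps)
qed

theorem theorem2:
  shows "\<exists>C::real. C > ln (1 + sqrt 2) / pi \<and> (3 * C + 4) / C < 17.26 \<and>
    (\<forall>(r::nat) (c :: vertex \<times> vertex \<Rightarrow> real) (d :: vertex \<Rightarrow> real). r \<ge> 1 \<longrightarrow>
       ground_energy r c d \<le> - (C / (3 * C + 4)) *
         ((\<Sum>e\<in>chimera_E r. \<bar>c e\<bar>) + (\<Sum>u\<in>chimera_V r. \<bar>d u\<bar>)))"
proof (intro exI[of _ "1/2"] conjI allI impI)
  have s2: "sqrt 2 < (3/2::real)"
    by (rule real_less_lsqrt) (auto simp: power2_eq_square)
  have "ln (1 + sqrt 2) \<le> 1 + sqrt 2 - 1"
    by (rule ln_le_minus_one) (simp add: add_pos_nonneg)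
  then have "ln (1 + sqrt 2) < pi / 2" using s2 pi_gt3 by linarith
  then show "ln (1 + sqrt 2) / pi < 1/2" by (simp add: field_simps)
  show "(3 * (1/2) + 4) / (1/2::real) < 17.26" by simp
  fix r c d
  show "ground_energy r c d \<le> - ((1/2) / (3 * (1/2) + 4)) *
         ((\<Sum>e\<in>chimera_E r. \<bar>c e\<bar>) + (\<Sum>u\<in>chimera_V r. \<bar>d u\<bar>))"
    using main_bound[of r c d] by simp
qed

end
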